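(* Suppose that $\mathcal L,\mathcal K,\mathscr J_1,\mathscr J_2$ are subsets of $\{1,\dots,n\}$ such that $\mathcal K\supseteq\mathscr J_1\cup\mathscr J_2$ and $\mathcal L\supseteq\mathscr J_1\cap\mathscr J_2\cap\mathcal K$. Then $$L_{\mathscr J_1}\cdot L_{\mathscr J_2}\subseteq L_{\mathcal L}+I(A_{\mathcal K}).$$
   Context: $\mathbb K$ is a field, $R=\mathbb K[x_{i_1,\dots,i_n}:1\le i_j\le a_j]$, $A=(x_{i_1,\dots,i_n})$ the generic $a_1\times\dots\times a_n$ table. For a tuple $\sigma$ with $\sigma_j\in\{1,\dots,a_j\}\cup\{+\}$, $x_\sigma$ is the sum of all $x_{i_1,\dots,i_n}$ with $i_j=\sigma_j$ whenever $\sigma_j\ne+$. For $\mathscr J=\{j_1<\dots<j_m\}\subseteq\{1,\dots,n\}$ the margin $A_{\mathscr J}$ is the table whose $(i_1,\dots,i_m)$ entry is $x_\sigma$ with $\sigma_{j_r}=i_r$, $\sigma_j=+$ for $j\notin\mathscr J$; $L_{\mathscr J}$ is the ideal of $R$ generated by the entries of $A_{\mathscr J}$. For a table $B$ with entries in $R$, $I(B)$ is the ideal generated by all generalized $2\times2$ minors of $B$, i.e. determinants $\det\begin{pmatrix} b_{i_1,\dots,i_m} & b_{j_1,\dots,j_{l-1},i_l,j_{l+1},\dots,j_m}\\ b_{i_1,\dots,i_{l-1},j_l,i_{l+1},\dots,i_m} & b_{j_1,\dots,j_m}\end{pmatrix}$. *)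

theory Defs
  imports Complex_Main "HOL-Library.Poly_Mapping"
begin

type_synonym ('v, 'k) mpoly = "('v \<Rightarrow>\<^sub>0 nat) \<Rightarrow>\<^sub>0 'k"

definition var :: "'v \<Rightarrow> ('v, 'k::comm_ring_1) mpoly" where
  "var v = Poly_Mapping.single (Poly_Mapping.single v 1) 1"

definition ideal_gen :: "'a::comm_ring_1 set \<Rightarrow> 'a set" where
  "ideal_gen S = module.span ((*) :: 'a \<Rightarrow> 'a \<Rightarrow> 'a) S"

definition ideal_prod :: "'a::comm_ring_1 set \<Rightarrow> 'a set \<Rightarrow> 'a set" where
  "ideal_prod I J = ideal_gen {x * y | x y. x \<in> I \<and> y \<in> J}"

definition ideal_sum :: "'a::comm_ring_1 set \<Rightarrow> 'a set \<Rightarrow> 'a set" where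
  "ideal_sum I J = ideal_gen (I \<union> J)"

text \<open>Cells of the a_0 x ... x a_(n-1) table (coordinates 0-based j < n, entries 1..a j).\<close>
definition cells :: "nat \<Rightarrow> (nat \<Rightarrow> nat) \<Rightarrow> nat list set" where
  "cells n a = {i. length i = n \<and> (\<forall>j<n. 1 \<le> i ! j \<and> i ! j \<le> a j)}"

text \<open>x_sigma: sigma is a list of length n, None standing for '+'.\<close>
definition xsum :: "nat \<Rightarrow> (nat \<Rightarrow> nat) \<Rightarrow> nat option list \<Rightarrow> (nat list, 'k::comm_ring_1) mpoly" where
  "xsum n a \<sigma> = (\<Sum>i\<in>{i \<in> cells n a. \<forall>j<n. \<sigma> ! j \<noteq> None \<longrightarrow> i ! j = the (\<sigma> ! j)}. var i)"

text \<open>Index tuples of the margin A_J, encoded as sigma with sigma_j in 1..a j for j in J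
  and sigma_j = + otherwise; the entry at sigma is xsum sigma.\<close>
definition margin_idx :: "nat \<Rightarrow> (nat \<Rightarrow> nat) \<Rightarrow> nat set \<Rightarrow> nat option list set" where
  "margin_idx n a J = {\<sigma>. length \<sigma> = n \<and>
     (\<forall>j<n. (j \<in> J \<longrightarrow> (\<exists>k. \<sigma> ! j = Some k \<and> 1 \<le> k \<and> k \<le> a j)) \<and>
            (j \<notin> J \<longrightarrow> \<sigma> ! j = None))}"

definition L_ideal :: "nat \<Rightarrow> (nat \<Rightarrow> nat) \<Rightarrow> nat set \<Rightarrow> (nat list, 'k::comm_ring_1) mpoly set" where
  "L_ideal n a J = ideal_gen (xsum n a ` margin_idx n a J)"

text \<open>Generalized 2x2 minors of the margin table A_K: for index tuples u, v and a
  coordinate l of K, det [b_u, b_(v with l := u_l); b_(u with l := v_l), b_v].\<close>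
definition gen_minors :: "nat \<Rightarrow> (nat \<Rightarrow> nat) \<Rightarrow> nat set \<Rightarrow> (nat list, 'k::comm_ring_1) mpoly set" where
  "gen_minors n a K = {xsum n a u * xsum n a v - xsum n a (v[l := u ! l]) * xsum n a (u[l := v ! l]) | u v l.
      u \<in> margin_idx n a K \<and> v \<in> margin_idx n a K \<and> l \<in> K}"

definition I_margin :: "nat \<Rightarrow> (nat \<Rightarrow> nat) \<Rightarrow> nat set \<Rightarrow> (nat list, 'k::comm_ring_1) mpoly set" where
  "I_margin n a K = ideal_gen (gen_minors n a K)"

end

theory Submission
  imports Defs
begin

lemma module_mult: "module ((*) :: 'a::comm_ring_1 \<Rightarrow> 'a \<Rightarrow> 'a)"
  by unfold_locales (auto simp: algebra_simps)

abbreviation "Mspan \<equiv> module.span ((*) :: 'a::comm_ring_1 \<Rightarrow> 'a \<Rightarrow> 'a)"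
abbreviation "Msubspace \<equiv> module.subspace ((*) :: 'a::comm_ring_1 \<Rightarrow> 'a \<Rightarrow> 'a)"

lemmas M_span_add = module.span_add[OF module_mult]
lemmas M_span_base = module.span_base[OF module_mult]
lemmas M_span_minimal = module.span_minimal[OF module_mult]
lemmas M_span_scale = module.span_scale[OF module_mult]
lemmas M_span_sum = module.span_sum[OF module_mult]
lemmas M_span_zero = module.span_zero[OF module_mult]
lemmas M_subspaceI = module.subspaceI[OF module_mult]
lemmas M_subspace_0 = module.subspace_0[OF module_mult]
lemmas M_subspace_add = module.subspace_add[OF module_mult]
lemmas M_subspace_scale = module.subspace_scale[OF module_mult]
lemmas M_subspace_span = module.subspace_span[OF module_mult]

lemma subspace_lmul:
  fixes T :: "'a::comm_ring_1 set"
  assumes T: "Msubspace T" shows "Msubspace {y. g * y \<in> T}"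
proof (rule M_subspaceI)
  show "0 \<in> {y. g * y \<in> T}" using M_subspace_0[OF T] by simp
  fix x y assume "x \<in> {y. g * y \<in> T}" "y \<in> {y. g * y \<in> T}"
  thus "x + y \<in> {y. g * y \<in> T}" using M_subspace_add[OF T] by (simp add: distrib_left)
next
  fix c x assume "x \<in> {y. g * y \<in> T}"
  hence "c * (g * x) \<in> T" using M_subspace_scale[OF T] by simp
  moreover have "g * (c * x) = c * (g * x)" by (rule mult.left_commute)
  ultimately show "c * x \<in> {y. g * y \<in> T}" by (metis mem_Collect_eq)
qed

lemma subspace_rmul:
  fixes T :: "'a::comm_ring_1 set"
  assumes T: "Msubspace T" shows "Msubspace {x. x * y \<in> T}"
proof (rule M_subspaceI)
  show "0 \<in> {x. x * y \<in> T}" using M_subspace_0[OF T] by simp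
  fix x z assume "x \<in> {x. x * y \<in> T}" "z \<in> {x. x * y \<in> T}"
  thus "x + z \<in> {x. x * y \<in> T}" using M_subspace_add[OF T] by (simp add: distrib_right)
next
  fix c x assume "x \<in> {x. x * y \<in> T}"
  thus "c * x \<in> {x. x * y \<in> T}" using M_subspace_scale[OF T, of "x * y" c]
    by (simp add: mult.assoc)
qed

lemma span_prod:
  fixes T :: "'a::comm_ring_1 set"
  assumes gen: "\<And>g h. g \<in> G1 \<Longrightarrow> h \<in> G2 \<Longrightarrow> g * h \<in> T" and T: "Msubspace T"
    and x: "x \<in> Mspan G1" and y: "y \<in> Mspan G2"
  shows "x * y \<in> T"
proof -
  have "Mspan G2 \<subseteq> {y. g * y \<in> T}" if "g \<in> G1" for g
    using gen that by (intro M_span_minimal subspace_lmul T) auto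
  hence "G1 \<subseteq> {x. x * y \<in> T}" using y by auto
  hence "Mspan G1 \<subseteq> {x. x * y \<in> T}" by (intro M_span_minimal subspace_rmul T)
  thus ?thesis using x by auto
qed

lemma finite_cells: "finite (cells n a)"
proof -
  let ?M = "\<Sum>j<n. a j"
  have *: "x \<le> ?M" if xs: "xs \<in> cells n a" and x: "x \<in> set xs" for xs x
  proof -
    obtain j where j: "j < length xs" "xs ! j = x" using x by (auto simp: in_set_conv_nth)
    with xs have "x \<le> a j" "j < n" by (auto simp: cells_def)
    moreover have "a j \<le> ?M" using \<open>j < n\<close> by (intro member_le_sum) auto
    ultimately show "x \<le> ?M" by auto
  qed
  have "cells n a \<subseteq> {xs. set xs \<subseteq> {..?M} \<and> length xs = n}"
    using * by (auto simp: cells_def)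
  thus ?thesis by (rule finite_subset) (intro finite_lists_length_eq, auto)
qed

lemma finite_margin: "finite (margin_idx n a K)"
proof -
  let ?M = "\<Sum>j<n. a j"
  have "margin_idx n a K \<subseteq> {xs. set xs \<subseteq> insert None (Some ` {..?M}) \<and> length xs = n}"
  proof safe
    fix xs x assume xs: "xs \<in> margin_idx n a K" and x: "x \<in> set xs" and nn: "x \<notin> Some ` {..?M}"
    then obtain j where j: "j < length xs" "xs ! j = x" by (auto simp: in_set_conv_nth)
    have "a j \<le> ?M" using j xs by (intro member_le_sum) (auto simp: margin_idx_def)
    with xs j nn show "x = None" by (auto simp: margin_idx_def split: if_splits)
  qed (auto simp: margin_idx_def)
  thus ?thesis by (rule finite_subset) (intro finite_lists_length_eq, auto)
qed

definition Cs :: "nat \<Rightarrow> (nat \<Rightarrow> nat) \<Rightarrow> nat option list \<Rightarrow> nat list set" where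
  "Cs n a \<sigma> = {i \<in> cells n a. \<forall>j<n. \<sigma> ! j \<noteq> None \<longrightarrow> i ! j = the (\<sigma> ! j)}"

lemma xsum_Cs: "xsum n a \<sigma> = sum var (Cs n a \<sigma>)"
  unfolding xsum_def Cs_def by simp

lemma xsum_group:
  assumes JK: "J \<subseteq> K" and Kn: "K \<subseteq> {..<n}" and \<sigma>: "\<sigma> \<in> margin_idx n a J"
  shows "xsum n a \<sigma> = (\<Sum>u\<in>{u \<in> margin_idx n a K. \<forall>j\<in>J. u ! j = \<sigma> ! j}. xsum n a u)"
proof -
  let ?U = "{u \<in> margin_idx n a K. \<forall>j\<in>J. u ! j = \<sigma> ! j}"
  have fin: "finite ?U" using finite_margin by (rule finite_subset[rotated]) auto
  have "(\<Sum>u\<in>?U. xsum n a u) = (\<Sum>u\<in>?U. sum var (Cs n a u))" by (simp add: xsum_Cs)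
  also have "\<dots> = sum var (\<Union>(Cs n a ` ?U))"
  proof (rule sum.UNION_disjoint[symmetric, OF fin])
    show "\<forall>i\<in>?U. finite (Cs n a i)" using finite_cells by (auto simp: Cs_def)
    show "\<forall>i\<in>?U. \<forall>j\<in>?U. i \<noteq> j \<longrightarrow> Cs n a i \<inter> Cs n a j = {}"
    proof (intro ballI impI)
      fix u v assume u: "u \<in> ?U" and v: "v \<in> ?U" and ne: "u \<noteq> v"
      have "length u = n" "length v = n" using u v by (auto simp: margin_idx_def)
      then obtain j where j: "j < n" "u ! j \<noteq> v ! j" using ne nth_equalityI by metis
      have "j \<in> K"
      proof (rule ccontr)
        assume "j \<notin> K"
        hence "u ! j = None" "v ! j = None" using u v j unfolding margin_idx_def by blast+
        thus False using j by simp
      qed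
      have "\<exists>k. u ! j = Some k" using u j \<open>j \<in> K\<close> unfolding margin_idx_def by blast
      moreover have "\<exists>k. v ! j = Some k" using v j \<open>j \<in> K\<close> unfolding margin_idx_def by blast
      ultimately obtain k k' where "u ! j = Some k" "v ! j = Some k'" by blast
      show "Cs n a u \<inter> Cs n a v = {}"
      proof (rule equals0I)
        fix c assume "c \<in> Cs n a u \<inter> Cs n a v"
        hence "c ! j = the (u ! j)" "c ! j = the (v ! j)" using j \<open>u ! j = Some k\<close> \<open>v ! j = Some k'\<close>
          unfolding Cs_def by blast+
        thus False using j \<open>u ! j = Some k\<close> \<open>v ! j = Some k'\<close> by simp
      qed
    qed
  qed
  also have "\<Union>(Cs n a ` ?U) = Cs n a \<sigma>"
  proof (intro equalityI subsetI)
    fix c assume "c \<in> \<Union>(Cs n a ` ?U)"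
    then obtain u where u: "u \<in> ?U" and c: "c \<in> Cs n a u" by auto
    show "c \<in> Cs n a \<sigma>" unfolding Cs_def
    proof (intro CollectI conjI allI impI)
      show "c \<in> cells n a" using c by (auto simp: Cs_def)
      fix j assume j: "j < n" "\<sigma> ! j \<noteq> None"
      have "j \<in> J"
      proof (rule ccontr)
        assume "j \<notin> J"
        hence "\<sigma> ! j = None" using \<sigma> j unfolding margin_idx_def by blast
        thus False using j by simp
      qed
      hence "u ! j = \<sigma> ! j" using u by blast
      moreover have "\<forall>j<n. u ! j \<noteq> None \<longrightarrow> c ! j = the (u ! j)" using c unfolding Cs_def by blast
      ultimately show "c ! j = the (\<sigma> ! j)" using j by auto
    qed
  next
    fix c assume c: "c \<in> Cs n a \<sigma>"
    define u where "u = map (\<lambda>j. if j \<in> K then Some (c ! j) else None) [0..<n]"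
    have cc: "c \<in> cells n a" using c by (auto simp: Cs_def)
    have "u \<in> margin_idx n a K" using cc by (auto simp: u_def margin_idx_def cells_def)
    moreover have "\<forall>j\<in>J. u ! j = \<sigma> ! j"
    proof
      fix j assume "j \<in> J"
      have jK: "j < n" "j \<in> K" using \<open>j \<in> J\<close> JK Kn by auto
      have "\<exists>k. \<sigma> ! j = Some k" using \<sigma> jK \<open>j \<in> J\<close> unfolding margin_idx_def by blast
      then obtain k where "\<sigma> ! j = Some k" by blast
      note jK this
      moreover have "c ! j = the (\<sigma> ! j)" using c jK \<open>\<sigma> ! j = Some k\<close> unfolding Cs_def by blast
      ultimately show "u ! j = \<sigma> ! j" by (simp add: u_def)
    qed
    moreover have "c \<in> Cs n a u" using cc by (auto simp: u_def Cs_def split: if_splits)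
    ultimately show "c \<in> \<Union>(Cs n a ` ?U)" by blast
  qed
  finally show ?thesis unfolding xsum_Cs[of n a \<sigma>] by (rule sym)
qed


definition swp :: "nat set \<Rightarrow> 'a list \<Rightarrow> 'a list \<Rightarrow> 'a list" where
  "swp S u v = map (\<lambda>j. if j \<in> S then v ! j else u ! j) [0..<length u]"

lemma swp_length[simp]: "length (swp S u v) = length u"
  by (simp add: swp_def)

lemma swp_nth: "j < length u \<Longrightarrow> swp S u v ! j = (if j \<in> S then v ! j else u ! j)"
  by (simp add: swp_def)

lemma swp_margin:
  assumes "u \<in> margin_idx n a K" "v \<in> margin_idx n a K"
  shows "swp S u v \<in> margin_idx n a K"
  using assms by (auto simp: margin_idx_def swp_nth)

lemma swap_minor:
  assumes fin: "finite S" and SK: "S \<subseteq> K" and Kn: "K \<subseteq> {..<n}"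
    and u: "u \<in> margin_idx n a K" and v: "v \<in> margin_idx n a K"
  shows "xsum n a u * xsum n a v - xsum n a (swp S u v) * xsum n a (swp S v u) \<in> (I_margin n a K :: (nat list, 'k::comm_ring_1) mpoly set)"
  using fin SK
proof (induction S rule: finite_induct)
  case empty
  have "swp {} u v = u" "swp {} v u = v" by (auto intro!: nth_equalityI simp: swp_nth)
  thus ?case by (simp add: I_margin_def ideal_gen_def M_span_zero)
next
  case (insert l S)
  let ?u1 = "swp S u v" and ?v1 = "swp S v u"
  have lu: "length u = n" "length v = n" using u v by (auto simp: margin_idx_def)
  have l: "l \<in> K" "l < n" using insert Kn by auto
  have u1: "?u1 \<in> margin_idx n a K" and v1: "?v1 \<in> margin_idx n a K" using u v by (auto intro: swp_margin)
  have e1: "?v1[l := ?u1 ! l] = swp (insert l S) v u"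
    using lu l insert by (auto intro!: nth_equalityI simp: swp_nth nth_list_update)
  have e2: "?u1[l := ?v1 ! l] = swp (insert l S) u v"
    using lu l insert by (auto intro!: nth_equalityI simp: swp_nth nth_list_update)
  have "xsum n a ?u1 * xsum n a ?v1 - xsum n a (?v1[l := ?u1 ! l]) * xsum n a (?u1[l := ?v1 ! l]) \<in> (gen_minors n a K :: (nat list, 'k) mpoly set)"
    unfolding gen_minors_def using u1 v1 l by blast
  hence m: "xsum n a ?u1 * xsum n a ?v1 - xsum n a (swp (insert l S) u v) * xsum n a (swp (insert l S) v u) \<in> (I_margin n a K :: (nat list, 'k) mpoly set)"
    unfolding e1 e2 I_margin_def ideal_gen_def by (metis M_span_base mult.commute)
  have ih: "xsum n a u * xsum n a v - xsum n a ?u1 * xsum n a ?v1 \<in> (I_margin n a K :: (nat list, 'k) mpoly set)"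
    using insert by auto
  have "(xsum n a u * xsum n a v - xsum n a (swp (insert l S) u v) * xsum n a (swp (insert l S) v u) :: (nat list, 'k) mpoly)
     = (xsum n a u * xsum n a v - xsum n a ?u1 * xsum n a ?v1) + (xsum n a ?u1 * xsum n a ?v1 - xsum n a (swp (insert l S) u v) * xsum n a (swp (insert l S) v u))"
    by simp
  thus ?case using ih m unfolding I_margin_def ideal_gen_def by (metis M_span_add)
qed


lemma margin_len: "u \<in> margin_idx n a K \<Longrightarrow> length u = n"
  by (simp add: margin_idx_def)

lemma gen_prod:
  fixes n :: nat and a :: "nat \<Rightarrow> nat" and L K J1 J2 :: "nat set"
  assumes "L \<subseteq> {..<n}" and Kn: "K \<subseteq> {..<n}"
    and J12K: "J1 \<union> J2 \<subseteq> K" and IL: "J1 \<inter> J2 \<inter> K \<subseteq> L"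
    and \<sigma>: "\<sigma> \<in> margin_idx n a J1" and \<tau>: "\<tau> \<in> margin_idx n a J2"
  shows "xsum n a \<sigma> * xsum n a \<tau> \<in> (ideal_sum (L_ideal n a L) (I_margin n a K) :: (nat list, 'k::comm_ring_1) mpoly set)"
proof -
  let ?x = "xsum n a :: nat option list \<Rightarrow> (nat list, 'k) mpoly"
  let ?T = "ideal_sum (L_ideal n a L) (I_margin n a K) :: (nat list, 'k) mpoly set"
  define S where "S = J2 - J1"
  define U where "U = {u \<in> margin_idx n a K. \<forall>j\<in>J1. u ! j = \<sigma> ! j}"
  define V where "V = {u \<in> margin_idx n a K. \<forall>j\<in>J2. u ! j = \<tau> ! j}"
  define \<rho> where "\<rho> = map (\<lambda>j. if j \<in> J1 then \<sigma> ! j else if j \<in> J2 then \<tau> ! j else None) [0..<n]"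
  define \<tau>' where "\<tau>' = map (\<lambda>j. if j \<in> J1 \<inter> J2 then \<tau> ! j else None) [0..<n]"
  define U' where "U' = {u \<in> margin_idx n a K. \<forall>j\<in>J1 \<union> J2. u ! j = \<rho> ! j}"
  define V' where "V' = {u \<in> margin_idx n a K. \<forall>j\<in>J1 \<inter> J2. u ! j = \<tau>' ! j}"
  define f where "f p = ?x (fst p) * ?x (snd p)" for p
  define h where "h p = (swp S (fst p) (snd p), swp S (snd p) (fst p))" for p :: "nat option list \<times> nat option list"
  have J1n: "j \<in> J1 \<Longrightarrow> j < n" and J2n: "j \<in> J2 \<Longrightarrow> j < n" and J1K: "J1 \<subseteq> K" and J2K: "J2 \<subseteq> K" for j
    using J12K Kn by auto
  have \<rho>m: "\<rho> \<in> margin_idx n a (J1 \<union> J2)"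
    using \<sigma> \<tau> by (auto simp: \<rho>_def margin_idx_def)
  have \<tau>'m: "\<tau>' \<in> margin_idx n a (J1 \<inter> J2)"
    using \<tau> by (auto simp: \<tau>'_def margin_idx_def)
  have fin: "finite U" "finite V" "finite U'" "finite V'"
    unfolding U_def V_def U'_def V'_def by (auto intro: finite_subset[OF _ finite_margin])
  have e1: "?x \<sigma> = (\<Sum>u\<in>U. ?x u)" unfolding U_def by (rule xsum_group[OF J1K Kn \<sigma>])
  have e2: "?x \<tau> = (\<Sum>u\<in>V. ?x u)" unfolding V_def by (rule xsum_group[OF J2K Kn \<tau>])
  have "?x \<sigma> * ?x \<tau> = (\<Sum>u\<in>U. ?x u) * (\<Sum>v\<in>V. ?x v)"
    by (simp only: e1 e2)
  also have "\<dots> = (\<Sum>p\<in>U \<times> V. f p)"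
    unfolding sum_product sum.cartesian_product f_def by (simp add: case_prod_beta)
  also have "\<dots> = (\<Sum>p\<in>U \<times> V. f p - f (h p)) + (\<Sum>p\<in>U \<times> V. f (h p))"
    by (simp add: sum.distrib[symmetric])
  also have "(\<Sum>p\<in>U \<times> V. f (h p)) = (\<Sum>p\<in>U' \<times> V'. f p)"
  proof (rule sum.reindex_bij_betw)
    have hh: "h (h p) = p" if "p \<in> U \<times> V \<or> p \<in> U' \<times> V'" for p
    proof -
      have "length (fst p) = n" "length (snd p) = n" using that
        by (auto simp: U_def V_def U'_def V'_def margin_len)
      thus ?thesis by (cases p) (auto intro!: nth_equalityI simp: h_def swp_nth)
    qed
    have m1: "h p \<in> U' \<times> V'" if p: "p \<in> U \<times> V" for p
    proof -
      obtain u v where uv: "p = (u, v)" "u \<in> U" "v \<in> V" using p by auto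
      have l: "length u = n" "length v = n" using uv by (auto simp: U_def V_def margin_len)
      have "swp S u v \<in> U'" using uv l J1n J2n
        by (auto simp: U'_def U_def V_def swp_margin swp_nth \<rho>_def S_def)
      moreover have "swp S v u \<in> V'" using uv l J1n J2n
        by (auto simp: V'_def U_def V_def swp_margin swp_nth \<tau>'_def S_def)
      ultimately show ?thesis using uv by (simp add: h_def)
    qed
    have m2: "h p \<in> U \<times> V" if p: "p \<in> U' \<times> V'" for p
    proof -
      obtain u v where uv: "p = (u, v)" "u \<in> U'" "v \<in> V'" using p by auto
      have l: "length u = n" "length v = n" using uv by (auto simp: U'_def V'_def margin_len)
      have mK: "u \<in> margin_idx n a K" "v \<in> margin_idx n a K" using uv by (auto simp: U'_def V'_def)
      have "swp S u v \<in> U" using uv l J1n J2n swp_margin[OF mK]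
        by (auto simp: U'_def U_def swp_nth \<rho>_def S_def)
      moreover have "swp S v u \<in> V"
        unfolding V_def
      proof (intro CollectI conjI ballI)
        show "swp S v u \<in> margin_idx n a K" using uv by (auto simp: U'_def V'_def swp_margin)
        fix j assume j: "j \<in> J2"
        show "swp S v u ! j = \<tau> ! j"
        proof (cases "j \<in> J1")
          case True
          thus ?thesis using uv l j J1n by (auto simp: V'_def swp_nth \<tau>'_def S_def)
        next
          case False
          thus ?thesis using uv l j J2n by (auto simp: U'_def swp_nth \<rho>_def S_def)
        qed
      qed
      ultimately show ?thesis using uv by (simp add: h_def)
    qed
    show "bij_betw h (U \<times> V) (U' \<times> V')"
    proof (rule bij_betw_byWitness[where f'=h])
      show "\<forall>a\<in>U \<times> V. h (h a) = a" using hh by blast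
      show "\<forall>a\<in>U' \<times> V'. h (h a) = a" using hh by blast
      show "h ` (U \<times> V) \<subseteq> U' \<times> V'" using m1 by blast
      show "h ` (U' \<times> V') \<subseteq> U \<times> V" using m2 by blast
    qed
  qed
  also have "(\<Sum>p\<in>U' \<times> V'. f p) = (\<Sum>u\<in>U'. ?x u) * (\<Sum>v\<in>V'. ?x v)"
    unfolding sum_product sum.cartesian_product f_def by (simp add: case_prod_beta)
  also have "\<dots> = ?x \<rho> * ?x \<tau>'"
  proof -
    have e3: "?x \<rho> = (\<Sum>u\<in>U'. ?x u)" unfolding U'_def by (rule xsum_group[OF J12K Kn \<rho>m])
    have "J1 \<inter> J2 \<subseteq> K" using J12K by auto
    have e4: "?x \<tau>' = (\<Sum>u\<in>V'. ?x u)" unfolding V'_def by (rule xsum_group[OF \<open>J1 \<inter> J2 \<subseteq> K\<close> Kn \<tau>'m])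
    show ?thesis by (simp only: e3 e4)
  qed
  finally have eq: "?x \<sigma> * ?x \<tau> = (\<Sum>p\<in>U \<times> V. f p - f (h p)) + ?x \<rho> * ?x \<tau>'" .
  have "(\<Sum>p\<in>U \<times> V. f p - f (h p)) \<in> I_margin n a K"
    unfolding I_margin_def ideal_gen_def
  proof (rule M_span_sum)
    fix p assume "p \<in> U \<times> V"
    then obtain u v where uv: "p = (u, v)" "u \<in> margin_idx n a K" "v \<in> margin_idx n a K"
      by (auto simp: U_def V_def)
    have "finite S" "S \<subseteq> K" using J12K Kn by (auto simp: S_def intro: finite_subset)
    from swap_minor[OF this Kn uv(2,3)]
    show "f p - f (h p) \<in> Mspan (gen_minors n a K)"
      by (simp add: uv f_def h_def I_margin_def ideal_gen_def)
  qed
  hence A: "(\<Sum>p\<in>U \<times> V. f p - f (h p)) \<in> ?T"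
    unfolding ideal_sum_def ideal_gen_def by (auto intro: M_span_base)
  have "?x \<tau>' \<in> (L_ideal n a L :: (nat list, 'k) mpoly set)"
  proof -
    have "J1 \<inter> J2 \<subseteq> L" using IL J12K by auto
    have e5: "?x \<tau>' = (\<Sum>u\<in>{u \<in> margin_idx n a L. \<forall>j\<in>J1 \<inter> J2. u ! j = \<tau>' ! j}. ?x u)"
      by (rule xsum_group[OF \<open>J1 \<inter> J2 \<subseteq> L\<close> \<open>L \<subseteq> {..<n}\<close> \<tau>'m])
    show ?thesis unfolding e5 unfolding L_ideal_def ideal_gen_def
      by (rule M_span_sum) (auto intro: M_span_base)
  qed
  hence "?x \<rho> * ?x \<tau>' \<in> (L_ideal n a L :: (nat list, 'k) mpoly set)"
    unfolding L_ideal_def ideal_gen_def by (rule M_span_scale)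
  hence B: "?x \<rho> * ?x \<tau>' \<in> ?T"
    unfolding ideal_sum_def ideal_gen_def by (auto intro: M_span_base)
  show ?thesis unfolding eq using A B unfolding ideal_sum_def ideal_gen_def by (rule M_span_add)
qed

theorem proposition6p1:
  fixes n :: nat and a :: "nat \<Rightarrow> nat" and L K J1 J2 :: "nat set"
  assumes "L \<subseteq> {..<n}" and "K \<subseteq> {..<n}" and "J1 \<subseteq> {..<n}" and "J2 \<subseteq> {..<n}"
    and "J1 \<union> J2 \<subseteq> K" and "J1 \<inter> J2 \<inter> K \<subseteq> L"
  shows "ideal_prod (L_ideal n a J1) (L_ideal n a J2)
           \<subseteq> ideal_sum (L_ideal n a L) (I_margin n a K :: (nat list, 'k::field) mpoly set)"
proof -
  let ?T = "ideal_sum (L_ideal n a L) (I_margin n a K) :: (nat list, 'k) mpoly set"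
  have sub: "Msubspace ?T" unfolding ideal_sum_def ideal_gen_def by (rule M_subspace_span)
  have gp: "g * h \<in> ?T" if "g \<in> xsum n a ` margin_idx n a J1" "h \<in> xsum n a ` margin_idx n a J2" for g h
    using that gen_prod[OF assms(1,2,5,6)] by blast
  have "x * y \<in> ?T" if "x \<in> L_ideal n a J1" "y \<in> L_ideal n a J2" for x y
    using that by (intro span_prod[OF gp sub]) (simp_all add: L_ideal_def ideal_gen_def)
  hence "{x * y | x y. x \<in> L_ideal n a J1 \<and> y \<in> L_ideal n a J2} \<subseteq> ?T" by blast
  thus ?thesis unfolding ideal_prod_def ideal_gen_def by (rule M_span_minimal[OF _ sub])
qed

end
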